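(* Let $(X,d)$ be an $R$-rough geodesic metric space for some $R\ge0$, and let $G$ be a group acting coboundedly on $X$ by isometries. Fix $x_0\in X$. For $t>0$ let $S_{x_0,t}=\{g\in G: d(x_0,gx_0)\le t\}$, let $d_{x_0,t}$ be the word metric on $G$ with respect to $S_{x_0,t}$ multiplied by $t$ (equivalently the graph metric on the graph with vertex set $G$ and an edge of length $t$ between $g$ and $gs$ for each $s\in S_{x_0,t}$), where $d_{x_0,t}(g,h)=\infty$ if $g,h$ lie in different components, and let $f_{x_0,t}\colon(G,d_{x_0,t})\to X$, $g\mapsto gx_0$. Let $K_{x_0,t}$ be the infimum of all $K\ge1$ for which there exists $C_K>0$ such that $f_{x_0,t}$ is a $(K,C_K)$-quasi-isometry (with $K_{x_0,t}=\infty$ if there is no such $K$). Then $K_{x_0,t}\to1$ as $t\to\infty$.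
   Context: $X$ is $R$-rough geodesic if any $x_1,x_2$ are joined by $f\colon[0,\ell]\to X$, $\ell=d(x_1,x_2)$, $f(0)=x_1,f(\ell)=x_2$, with $|d(f(s),f(t))-|s-t||\le R$. The action is cobounded if some (equivalently every) orbit is $D$-dense in $X$ for some $D$. A map $f$ is a $(K,C)$-quasi-isometry if $\frac1Kd(a,b)-C\le d(f(a),f(b))\le Kd(a,b)+C$ for all $a,b$ and every point of the target lies within $C$ of the image. *)

theory Defs
  imports "HOL-Analysis.Analysis" "HOL-Algebra.Group"
begin

definition rough_geodesic :: "real \<Rightarrow> 'a::metric_space itself \<Rightarrow> bool" where
  "rough_geodesic R (_::'a itself) \<longleftrightarrow>
     (\<forall>x1 x2::'a. \<exists>f::real \<Rightarrow> 'a. f 0 = x1 \<and> f (dist x1 x2) = x2 \<and>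
        (\<forall>s\<in>{0..dist x1 x2}. \<forall>t\<in>{0..dist x1 x2}. \<bar>dist (f s) (f t) - \<bar>s - t\<bar>\<bar> \<le> R))"

definition isometric_action :: "('g, 'c) monoid_scheme \<Rightarrow> ('g \<Rightarrow> 'a::metric_space \<Rightarrow> 'a) \<Rightarrow> bool" where
  "isometric_action G act \<longleftrightarrow>
     (\<forall>x. act \<one>\<^bsub>G\<^esub> x = x) \<and>
     (\<forall>g\<in>carrier G. \<forall>h\<in>carrier G. \<forall>x. act (g \<otimes>\<^bsub>G\<^esub> h) x = act g (act h x)) \<and>
     (\<forall>g\<in>carrier G. \<forall>x y. dist (act g x) (act g y) = dist x y)"

definition cobounded_action :: "('g, 'c) monoid_scheme \<Rightarrow> ('g \<Rightarrow> 'a::metric_space \<Rightarrow> 'a) \<Rightarrow> bool" where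
  "cobounded_action G act \<longleftrightarrow> (\<exists>y D. \<forall>x. \<exists>g\<in>carrier G. dist x (act g y) \<le> D)"

definition S_set :: "('g, 'c) monoid_scheme \<Rightarrow> ('g \<Rightarrow> 'a::metric_space \<Rightarrow> 'a) \<Rightarrow> 'a \<Rightarrow> real \<Rightarrow> 'g set" where
  "S_set G act x0 t = {g\<in>carrier G. dist x0 (act g x0) \<le> t}"

text \<open>Word length of g^{-1}h with respect to S (infinite if not representable).\<close>
definition word_len :: "('g, 'c) monoid_scheme \<Rightarrow> 'g set \<Rightarrow> 'g \<Rightarrow> 'g \<Rightarrow> enat" where
  "word_len G S g h = Inf {enat (length ws) | ws. set ws \<subseteq> S \<and>
      h = g \<otimes>\<^bsub>G\<^esub> foldr (\<lambda>s acc. s \<otimes>\<^bsub>G\<^esub> acc) ws \<one>\<^bsub>G\<^esub>}"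

definition word_dist :: "('g, 'c) monoid_scheme \<Rightarrow> ('g \<Rightarrow> 'a::metric_space \<Rightarrow> 'a) \<Rightarrow> 'a \<Rightarrow> real \<Rightarrow> 'g \<Rightarrow> 'g \<Rightarrow> ereal" where
  "word_dist G act x0 t g h = ereal t * ereal_of_enat (word_len G (S_set G act x0 t) g h)"

definition quasi_isometry_on :: "'g set \<Rightarrow> ('g \<Rightarrow> 'g \<Rightarrow> ereal) \<Rightarrow> ('g \<Rightarrow> 'b::metric_space) \<Rightarrow> real \<Rightarrow> real \<Rightarrow> bool" where
  "quasi_isometry_on A dA f K C \<longleftrightarrow>
     (\<forall>a\<in>A. \<forall>b\<in>A. ereal (1/K) * dA a b - ereal C \<le> ereal (dist (f a) (f b)) \<and>
                   ereal (dist (f a) (f b)) \<le> ereal K * dA a b + ereal C) \<and>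
     (\<forall>y. \<exists>a\<in>A. dist y (f a) \<le> C)"

definition K_const :: "('g, 'c) monoid_scheme \<Rightarrow> ('g \<Rightarrow> 'a::metric_space \<Rightarrow> 'a) \<Rightarrow> 'a \<Rightarrow> real \<Rightarrow> ereal" where
  "K_const G act x0 t = Inf {ereal K | K. K \<ge> 1 \<and> (\<exists>C>0.
      quasi_isometry_on (carrier G) (word_dist G act x0 t) (\<lambda>g. act g x0) K C)}"

end

theory Submission
  imports Defs "HOL-Real_Asymp.Real_Asymp"
begin

lemma foldr_closed:
  assumes "group G" "set ws \<subseteq> carrier G"
  shows "foldr (\<lambda>s acc. s \<otimes>\<^bsub>G\<^esub> acc) ws \<one>\<^bsub>G\<^esub> \<in> carrier G"
  using assms(2)
proof (induction ws)
  case Nil then show ?case using group.is_monoid[OF assms(1)] by (simp add: monoid.one_closed)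
next
  case (Cons a ws) then show ?case using group.is_monoid[OF assms(1)] by (simp add: monoid.m_closed)
qed

lemma telescope:
  assumes "group G" "\<forall>i. gs i \<in> carrier G"
  shows "gs m \<otimes>\<^bsub>G\<^esub> foldr (\<lambda>s acc. s \<otimes>\<^bsub>G\<^esub> acc)
     (map (\<lambda>i. inv\<^bsub>G\<^esub> (gs i) \<otimes>\<^bsub>G\<^esub> gs (Suc i)) [m..<m+n]) \<one>\<^bsub>G\<^esub> = gs (m+n)"
proof (induction n arbitrary: m)
  case 0
  interpret group G by fact
  show ?case using assms(2) by simp
next
  case (Suc n)
  interpret group G by fact
  have e: "[m..<m + Suc n] = m # [Suc m..<Suc m + n]" by (simp add: upt_rec)
  define F where "F = foldr (\<lambda>s acc. s \<otimes>\<^bsub>G\<^esub> acc)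
     (map (\<lambda>i. inv\<^bsub>G\<^esub> (gs i) \<otimes>\<^bsub>G\<^esub> gs (Suc i)) [Suc m..<Suc m+n]) \<one>\<^bsub>G\<^esub>"
  have F: "F \<in> carrier G" unfolding F_def
    by (rule foldr_closed[OF assms(1)]) (use assms(2) in auto)
  have "gs m \<otimes>\<^bsub>G\<^esub> foldr (\<lambda>s acc. s \<otimes>\<^bsub>G\<^esub> acc)
     (map (\<lambda>i. inv\<^bsub>G\<^esub> (gs i) \<otimes>\<^bsub>G\<^esub> gs (Suc i)) [m..<m+Suc n]) \<one>\<^bsub>G\<^esub>
     = gs m \<otimes>\<^bsub>G\<^esub> ((inv\<^bsub>G\<^esub> (gs m) \<otimes>\<^bsub>G\<^esub> gs (Suc m)) \<otimes>\<^bsub>G\<^esub> F)"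
    unfolding e F_def by simp
  also have "\<dots> = gs (Suc m) \<otimes>\<^bsub>G\<^esub> F"
    using assms(2) F by (simp add: m_assoc[symmetric])
  also have "\<dots> = gs (Suc m + n)" unfolding F_def by (rule Suc.IH)
  finally show ?case by simp
qed

lemma dist_word:
  assumes "group G" "isometric_action G act" "g \<in> carrier G"
    "set ws \<subseteq> S_set G act x0 t"
  shows "dist (act g x0) (act (g \<otimes>\<^bsub>G\<^esub> foldr (\<lambda>s acc. s \<otimes>\<^bsub>G\<^esub> acc) ws \<one>\<^bsub>G\<^esub>) x0) \<le> t * length ws"
  using assms(3,4)
proof (induction ws arbitrary: g)
  case Nil
  interpret group G by fact
  show ?case using Nil by simp
next
  case (Cons s ws)
  interpret group G by fact
  have s: "s \<in> carrier G" "dist x0 (act s x0) \<le> t" using Cons.prems by (auto simp: S_set_def)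
  have ws: "set ws \<subseteq> S_set G act x0 t" using Cons.prems by auto
  define F where "F = foldr (\<lambda>s acc. s \<otimes>\<^bsub>G\<^esub> acc) ws \<one>\<^bsub>G\<^esub>"
  have F: "F \<in> carrier G" unfolding F_def
    by (rule foldr_closed[OF assms(1)]) (use ws in \<open>auto simp: S_set_def\<close>)
  have gs: "g \<otimes>\<^bsub>G\<^esub> s \<in> carrier G" using s Cons.prems by simp
  have IH: "dist (act (g \<otimes>\<^bsub>G\<^esub> s) x0) (act ((g \<otimes>\<^bsub>G\<^esub> s) \<otimes>\<^bsub>G\<^esub> F) x0) \<le> t * length ws"
    using Cons.IH[OF gs ws] unfolding F_def by simp
  have d1: "dist (act g x0) (act (g \<otimes>\<^bsub>G\<^esub> s) x0) \<le> t"
    using assms(2) s Cons.prems unfolding isometric_action_def by auto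
  have eq: "g \<otimes>\<^bsub>G\<^esub> foldr (\<lambda>s acc. s \<otimes>\<^bsub>G\<^esub> acc) (s # ws) \<one>\<^bsub>G\<^esub> = (g \<otimes>\<^bsub>G\<^esub> s) \<otimes>\<^bsub>G\<^esub> F"
    using s F Cons.prems by (simp add: F_def m_assoc)
  show ?case unfolding eq
    using dist_triangle[of "act g x0" "act ((g \<otimes>\<^bsub>G\<^esub> s) \<otimes>\<^bsub>G\<^esub> F) x0" "act (g \<otimes>\<^bsub>G\<^esub> s) x0"] IH d1
    by (simp add: algebra_simps)
qed

lemma density:
  assumes "isometric_action G act" "cobounded_action G act"
  obtains D where "D \<ge> 0" "\<And>x. \<exists>k\<in>carrier G. dist x (act k x0) \<le> D"
proof -
  obtain y D0 where yD: "\<And>x. \<exists>g\<in>carrier G. dist x (act g y) \<le> D0"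
    using assms(2) unfolding cobounded_action_def by blast
  have "\<exists>k\<in>carrier G. dist x (act k x0) \<le> D0 + dist y x0" for x
  proof -
    obtain g where g: "g \<in> carrier G" "dist x (act g y) \<le> D0" using yD by blast
    have "dist (act g y) (act g x0) = dist y x0" using assms(1) g(1) unfolding isometric_action_def by auto
    then have "dist x (act g x0) \<le> D0 + dist y x0"
      using dist_triangle[of x "act g x0" "act g y"] g(2) by linarith
    then show ?thesis using g(1) by blast
  qed
  moreover have "D0 \<ge> 0" using yD[of x0] by (meson dist_not_less_zero order_trans not_le)
  ultimately show ?thesis using that[of "D0 + dist y x0"] by auto
qed

lemma chain:
  assumes grp: "group G" and iso: "isometric_action G act" and rg: "rough_geodesic R TYPE('a::metric_space)"
    and R: "R \<ge> 0" and D: "D \<ge> 0" and dens: "\<And>x::'a. \<exists>k\<in>carrier G. dist x (act k x0) \<le> D"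
    and t: "t > R + 2*D" and g: "g \<in> carrier G" and h: "h \<in> carrier G"
  shows "\<exists>ws. set ws \<subseteq> S_set G act x0 t \<and> h = g \<otimes>\<^bsub>G\<^esub> foldr (\<lambda>s acc. s \<otimes>\<^bsub>G\<^esub> acc) ws \<one>\<^bsub>G\<^esub>
     \<and> real (length ws) \<le> dist (act g x0) (act h x0) / (t - R - 2*D) + 2"
proof -
  interpret group G by fact
  define a where "a = act g x0"
  define b where "b = act h x0"
  define L where "L = dist a b"
  define \<sigma> where "\<sigma> = t - R - 2*D"
  have \<sigma>: "\<sigma> > 0" using t unfolding \<sigma>_def by simp
  have L0: "L \<ge> 0" unfolding L_def by simp
  obtain f where f0: "f 0 = a" and fL: "f L = b"
    and fr: "\<And>s u. s \<in> {0..L} \<Longrightarrow> u \<in> {0..L} \<Longrightarrow> \<bar>dist (f s) (f u) - \<bar>s - u\<bar>\<bar> \<le> R"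
    using rg unfolding rough_geodesic_def L_def by blast
  define N where "N = nat \<lceil>L/\<sigma>\<rceil> + 1"
  have NL: "real N * \<sigma> \<ge> L"
  proof -
    have "real N \<ge> L/\<sigma>" unfolding N_def by linarith
    then show ?thesis using \<sigma> by (simp add: field_simps)
  qed
  have Nle: "real N \<le> L/\<sigma> + 2"
  proof -
    have "L/\<sigma> \<ge> 0" using L0 \<sigma> by simp
    then have "real (nat \<lceil>L/\<sigma>\<rceil>) \<le> L/\<sigma> + 1" by linarith
    then show ?thesis unfolding N_def by simp
  qed
  define \<tau> where "\<tau> i = min (real i * \<sigma>) L" for i :: nat
  define p where "p i = f (\<tau> i)" for i
  have \<tau>r: "\<tau> i \<in> {0..L}" for i unfolding \<tau>_def using \<sigma> L0 by auto
  have p0: "p 0 = a" unfolding p_def \<tau>_def using L0 f0 by simp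
  have pN: "p i = b" if "i \<ge> N" for i
  proof -
    have "real i * \<sigma> \<ge> real N * \<sigma>" using that \<sigma> by (simp add: mult_right_mono)
    then have "\<tau> i = L" unfolding \<tau>_def using NL by simp
    then show ?thesis unfolding p_def using fL by simp
  qed
  have pstep: "dist (p i) (p (Suc i)) \<le> \<sigma> + R" for i
  proof -
    have "\<bar>\<tau> i - \<tau> (Suc i)\<bar> \<le> \<sigma>" unfolding \<tau>_def using \<sigma> by (auto simp: min_def algebra_simps)
    moreover have "\<bar>dist (p i) (p (Suc i)) - \<bar>\<tau> i - \<tau> (Suc i)\<bar>\<bar> \<le> R"
      unfolding p_def by (rule fr[OF \<tau>r \<tau>r])
    ultimately show ?thesis by linarith
  qed
  define gs where "gs i = (if i = 0 then g else if i \<ge> N then h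
     else (SOME k. k \<in> carrier G \<and> dist (p i) (act k x0) \<le> D))" for i
  have gsp: "gs i \<in> carrier G \<and> dist (p i) (act (gs i) x0) \<le> D" for i
  proof (cases "i = 0")
    case True then show ?thesis using g p0 D unfolding gs_def a_def by simp
  next
    case False
    show ?thesis
    proof (cases "i \<ge> N")
      case True then show ?thesis using False h pN[OF True] D unfolding gs_def b_def by simp
    next
      case F2: False
      have "\<exists>k. k \<in> carrier G \<and> dist (p i) (act k x0) \<le> D" using dens by blast
      then have "(SOME k. k \<in> carrier G \<and> dist (p i) (act k x0) \<le> D) \<in> carrier G \<and>
         dist (p i) (act (SOME k. k \<in> carrier G \<and> dist (p i) (act k x0) \<le> D) x0) \<le> D"
        by (rule someI_ex)
      then show ?thesis using False F2 unfolding gs_def by simp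
    qed
  qed
  define ws where "ws = map (\<lambda>i. inv\<^bsub>G\<^esub> (gs i) \<otimes>\<^bsub>G\<^esub> gs (Suc i)) [0..<N]"
  have "set ws \<subseteq> S_set G act x0 t"
  proof
    fix s assume "s \<in> set ws"
    then obtain i where s: "s = inv\<^bsub>G\<^esub> (gs i) \<otimes>\<^bsub>G\<^esub> gs (Suc i)" unfolding ws_def by auto
    have c: "gs i \<in> carrier G" "gs (Suc i) \<in> carrier G" using gsp by auto
    have sc: "s \<in> carrier G" using s c by simp
    have e: "gs i \<otimes>\<^bsub>G\<^esub> s = gs (Suc i)" using s c by (simp add: m_assoc[symmetric])
    have "dist x0 (act s x0) = dist (act (gs i) x0) (act (gs i) (act s x0))"
      using iso c sc unfolding isometric_action_def by auto
    also have "\<dots> = dist (act (gs i) x0) (act (gs (Suc i)) x0)"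
    proof -
      have "act (gs i) (act s x0) = act (gs i \<otimes>\<^bsub>G\<^esub> s) x0"
        using iso c sc unfolding isometric_action_def by auto
      then show ?thesis using e by simp
    qed
    also have "\<dots> \<le> dist (act (gs i) x0) (p i) + dist (p i) (p (Suc i)) + dist (p (Suc i)) (act (gs (Suc i)) x0)"
      using dist_triangle[of "act (gs i) x0" "p (Suc i)" "p i"]
        dist_triangle[of "act (gs i) x0" "act (gs (Suc i)) x0" "p (Suc i)"] by linarith
    also have "\<dots> \<le> D + (\<sigma> + R) + D" using gsp[of i] gsp[of "Suc i"] pstep[of i]
      by (simp add: dist_commute)
    also have "\<dots> = t" unfolding \<sigma>_def by simp
    finally show "s \<in> S_set G act x0 t" using sc unfolding S_set_def by simp
  qed
  moreover have "h = g \<otimes>\<^bsub>G\<^esub> foldr (\<lambda>s acc. s \<otimes>\<^bsub>G\<^esub> acc) ws \<one>\<^bsub>G\<^esub>"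
  proof -
    have allc: "\<forall>i. gs i \<in> carrier G" using gsp by blast
    have "gs 0 \<otimes>\<^bsub>G\<^esub> foldr (\<lambda>s acc. s \<otimes>\<^bsub>G\<^esub> acc) ws \<one>\<^bsub>G\<^esub> = gs (0 + N)"
      unfolding ws_def using telescope[OF grp allc, of 0 N] by simp
    then show ?thesis unfolding gs_def N_def by simp
  qed
  moreover have "real (length ws) \<le> dist (act g x0) (act h x0) / (t - R - 2*D) + 2"
    using Nle unfolding ws_def L_def a_def b_def \<sigma>_def by simp
  ultimately show ?thesis by blast
qed

lemma wl:
  assumes grp: "group G" and iso: "isometric_action G act" and rg: "rough_geodesic R TYPE('a::metric_space)"
    and R: "R \<ge> 0" and D: "D \<ge> 0" and dens: "\<And>x::'a. \<exists>k\<in>carrier G. dist x (act k x0) \<le> D"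
    and t: "t > R + 2*D" and g: "g \<in> carrier G" and h: "h \<in> carrier G"
  shows "\<exists>m. word_len G (S_set G act x0 t) g h = enat m \<and>
     real m \<le> dist (act g x0) (act h x0) / (t - R - 2*D) + 2 \<and>
     dist (act g x0) (act h x0) \<le> t * real m"
proof -
  define W where "W = {enat (length ws) | ws. set ws \<subseteq> S_set G act x0 t \<and>
      h = g \<otimes>\<^bsub>G\<^esub> foldr (\<lambda>s acc. s \<otimes>\<^bsub>G\<^esub> acc) ws \<one>\<^bsub>G\<^esub>}"
  obtain ws where ws: "set ws \<subseteq> S_set G act x0 t" "h = g \<otimes>\<^bsub>G\<^esub> foldr (\<lambda>s acc. s \<otimes>\<^bsub>G\<^esub> acc) ws \<one>\<^bsub>G\<^esub>"
     "real (length ws) \<le> dist (act g x0) (act h x0) / (t - R - 2*D) + 2"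
    using chain[OF assms] by blast
  have inW: "enat (length ws) \<in> W" unfolding W_def using ws by blast
  then have "Inf W \<in> W" unfolding Inf_enat_def by (auto intro: LeastI)
  then obtain ws' where ws': "Inf W = enat (length ws')" "set ws' \<subseteq> S_set G act x0 t"
     "h = g \<otimes>\<^bsub>G\<^esub> foldr (\<lambda>s acc. s \<otimes>\<^bsub>G\<^esub> acc) ws' \<one>\<^bsub>G\<^esub>" unfolding W_def by blast
  have "Inf W \<le> enat (length ws)" using inW by (rule Inf_lower)
  then have le: "length ws' \<le> length ws" using ws'(1) by simp
  have wlW: "word_len G (S_set G act x0 t) g h = Inf W" unfolding word_len_def W_def by simp
  have "dist (act g x0) (act h x0) \<le> t * real (length ws')"
    using dist_word[OF grp iso g ws'(2)] ws'(3) by simp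
  moreover have "real (length ws') \<le> dist (act g x0) (act h x0) / (t - R - 2*D) + 2"
    using le ws(3) by linarith
  ultimately show ?thesis using wlW ws'(1) by metis
qed

lemma K_bound:
  assumes grp: "group G" and iso: "isometric_action G act" and rg: "rough_geodesic R TYPE('a::metric_space)"
    and R: "R \<ge> 0" and D: "D \<ge> 0" and dens: "\<And>x::'a. \<exists>k\<in>carrier G. dist x (act k x0) \<le> D"
    and t: "t > R + 2*D"
  shows "K_const G act x0 t \<le> ereal (t / (t - R - 2*D))"
proof -
  define \<sigma> where "\<sigma> = t - R - 2*D"
  have \<sigma>: "\<sigma> > 0" "\<sigma> \<le> t" using t R D unfolding \<sigma>_def by auto
  define K where "K = t / \<sigma>"
  have K1: "K \<ge> 1" unfolding K_def using \<sigma> by simp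
  define C where "C = 2*t + D + 1"
  have C: "C > 0" unfolding C_def using t R D by simp
  have "quasi_isometry_on (carrier G) (word_dist G act x0 t) (\<lambda>g. act g x0) K C"
    unfolding quasi_isometry_on_def
  proof (intro conjI ballI allI)
    fix a b assume a: "a \<in> carrier G" and b: "b \<in> carrier G"
    obtain m where m: "word_len G (S_set G act x0 t) a b = enat m"
      "real m \<le> dist (act a x0) (act b x0) / \<sigma> + 2"
      "dist (act a x0) (act b x0) \<le> t * real m"
      using wl[OF assms a b] unfolding \<sigma>_def by blast
    define L where "L = dist (act a x0) (act b x0)"
    have wd: "word_dist G act x0 t a b = ereal (t * real m)"
      unfolding word_dist_def m(1) by simp
    have "1/K * (t * real m) = \<sigma> * real m" unfolding K_def using \<sigma> t R D by (simp add: field_simps)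
    also have "\<dots> \<le> \<sigma> * (L/\<sigma> + 2)" using m(2) \<sigma> unfolding L_def by (simp add: mult_left_mono)
    also have "\<dots> = L + 2*\<sigma>" using \<sigma> by (simp add: field_simps)
    finally have "1/K * (t * real m) - C \<le> L" using \<sigma> unfolding C_def using D by linarith
    then show "ereal (1 / K) * word_dist G act x0 t a b - ereal C \<le> ereal (dist (act a x0) (act b x0))"
      unfolding wd L_def by simp
    have "t * real m \<le> K * (t * real m)" using K1 t R D
      by (simp add: mult_right_mono[of 1 K "t * real m", simplified])
    then have "L \<le> K * (t * real m) + C" using m(3) C unfolding L_def by linarith
    then show "ereal (dist (act a x0) (act b x0)) \<le> ereal K * word_dist G act x0 t a b + ereal C"
      unfolding wd L_def by simp
  next
    fix y
    obtain k where "k \<in> carrier G" "dist y (act k x0) \<le> D" using dens by blast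
    moreover have "D \<le> C" unfolding C_def using t R D by simp
    ultimately show "\<exists>a\<in>carrier G. dist y (act a x0) \<le> C" by force
  qed
  then have "ereal K \<in> {ereal K | K. K \<ge> 1 \<and> (\<exists>C>0.
      quasi_isometry_on (carrier G) (word_dist G act x0 t) (\<lambda>g. act g x0) K C)}"
    using K1 C by blast
  then have "K_const G act x0 t \<le> ereal K" unfolding K_const_def by (rule Inf_lower)
  then show ?thesis unfolding K_def \<sigma>_def .
qed

theorem lemma5p2:
  fixes G :: "('g, 'c) monoid_scheme" and act :: "'g \<Rightarrow> 'a::metric_space \<Rightarrow> 'a"
    and R :: real and x0 :: 'a
  assumes "R \<ge> 0" and "rough_geodesic R TYPE('a)"
    and "group G" and "isometric_action G act" and "cobounded_action G act"
  shows "((\<lambda>t. K_const G act x0 t) \<longlongrightarrow> 1) at_top"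
proof -
  obtain D where D: "D \<ge> 0" "\<And>x. \<exists>k\<in>carrier G. dist x (act k x0) \<le> D"
    using density[OF assms(4,5), of x0] by blast
  define c where "c = R + 2*D"
  have low: "\<forall>\<^sub>F t in at_top. 1 \<le> K_const G act x0 t"
    unfolding K_const_def by (intro always_eventually allI Inf_greatest) auto
  have up: "\<forall>\<^sub>F t in at_top. K_const G act x0 t \<le> ereal (t / (t - c))"
    unfolding eventually_at_top_linorder
    using K_bound[OF assms(3,4,2,1) D] unfolding c_def
    by (intro exI[of _ "R + 2*D + 1"]) (auto simp: algebra_simps)
  have "((\<lambda>t::real. t / (t - c)) \<longlongrightarrow> 1) at_top" by real_asymp
  then have lim: "((\<lambda>t::real. ereal (t / (t - c))) \<longlongrightarrow> 1) at_top"
    using tendsto_ereal[of "\<lambda>t::real. t / (t - c)" 1 at_top] by (simp add: one_ereal_def)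
  show ?thesis by (rule tendsto_sandwich[OF low up tendsto_const lim])
qed

end
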